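(* Let $m_1,m_2\in\{m_L,m_R\}$. Then both cutoff profiles $(\xi_L(m_1,m_2),\xi_L(m_2,m_1))$ and $(\xi_R(m_1,m_2),\xi_R(m_2,m_1))$ are strict equilibria and neighborhood invader strategy profiles of the induced game $\Gamma(F_{m_1},F_{m_2})$.
   Context: Two players; types drawn independently from a distribution on $[0,1]$ with continuous CDF $F$ and density $f>0$ on $[0,1]$; each chooses $L$ or $R$; a type-$u$ player gets $1-u$ if both choose $L$, $u$ if both choose $R$, $0$ otherwise. Players first send messages via the message function $\mu^*$: type $u$ sends $m_L$ if $u\le1/2$ and $m_R$ if $u>1/2$. $F_{m_L}$ is $F$ conditioned on $[0,1/2]$ and $F_{m_R}$ is $F$ conditioned on $(1/2,1]$. $\xi_L(m,m')=0$ if $m=m'=m_R$ and $1$ otherwise; $\xi_R(m,m')=1$ if $m=m'=m_L$ and $0$ otherwise. Induced game $\Gamma(F_{m_1},F_{m_2})$: player $i\in\{1,2\}$ has type drawn from $F_{m_i}$ (independently) and chooses a cutoff $x_i\in[0,1]$, playing $L$ iff her type $\le x_i$. $\pi^{m_1,m_2}(x_1,x_2)=\int[\mathbf 1\{u\le x_1\}(1-u)F_{m_2}(x_2)+\mathbf 1\{u>x_1\}u(1-F_{m_2}(x_2))]dF_{m_1}(u)$ is player 1's expected payoff; $\pi^{m_2,m_1}(x_2,x_1)$ is player 2's. Cutoffs $x_i,x_i'$ of player $i$ are equivalent ($x_i\approx x_i'$) if $F_{m_i}(x_i)=F_{m_i}(x_i')$. $(x_1,x_2)$ is a strict equilibrium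 if $\pi^{m_1,m_2}(x_1',x_2)\ge\pi^{m_1,m_2}(x_1,x_2)$ implies $x_1'\approx x_1$ and $\pi^{m_2,m_1}(x_2',x_1)\ge\pi^{m_2,m_1}(x_2,x_1)$ implies $x_2'\approx x_2$. A strict equilibrium $(x_1,x_2)$ is a neighborhood invader strategy profile if there exists $\epsilon>0$ such that for every $(x_1',x_2')$ with $x_1'\not\approx x_1$, $x_2'\not\approx x_2$, $|x_1'-x_1|<\epsilon$, $|x_2'-x_2|<\epsilon$, either $\pi^{m_1,m_2}(x_1,x_2')>\pi^{m_1,m_2}(x_1',x_2')$ or $\pi^{m_2,m_1}(x_2,x_1')>\pi^{m_2,m_1}(x_2',x_1')$. *)

theory Defs
  imports "HOL-Analysis.Analysis"
begin

text \<open>The type distribution has density f on [0,1] (f > 0 there, total mass 1);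
  F u = integral of f over [0,1] intersected with (-inf,u].  Expectations dF are
  integrals against the density.\<close>

datatype msg = mL | mR

definition msg_set :: "msg \<Rightarrow> real set" where
  "msg_set m = (case m of mL \<Rightarrow> {0..1/2} | mR \<Rightarrow> {1/2<..1})"

definition cdf :: "(real \<Rightarrow> real) \<Rightarrow> real \<Rightarrow> real" where
  "cdf f x = integral ({0..1} \<inter> {..x}) f"

definition msg_mass :: "(real \<Rightarrow> real) \<Rightarrow> msg \<Rightarrow> real" where
  "msg_mass f m = integral (msg_set m) f"

definition cond_cdf :: "(real \<Rightarrow> real) \<Rightarrow> msg \<Rightarrow> real \<Rightarrow> real" where
  "cond_cdf f m x = integral (msg_set m \<inter> {..x}) f / msg_mass f m"

text \<open>pi^{m1,m2}(x1,x2): expected payoff of a player of type drawn from F_{m1}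
  using cutoff x1 against an opponent of type drawn from F_{m2} using cutoff x2.\<close>
definition payoff :: "(real \<Rightarrow> real) \<Rightarrow> msg \<Rightarrow> msg \<Rightarrow> real \<Rightarrow> real \<Rightarrow> real" where
  "payoff f m1 m2 x1 x2 =
     integral (msg_set m1)
       (\<lambda>u. ((if u \<le> x1 then (1 - u) * cond_cdf f m2 x2 else u * (1 - cond_cdf f m2 x2)) * f u))
     / msg_mass f m1"

definition equiv_cutoff :: "(real \<Rightarrow> real) \<Rightarrow> msg \<Rightarrow> real \<Rightarrow> real \<Rightarrow> bool" where
  "equiv_cutoff f m x x' \<longleftrightarrow> cond_cdf f m x = cond_cdf f m x'"

definition strict_equilibrium :: "(real \<Rightarrow> real) \<Rightarrow> msg \<Rightarrow> msg \<Rightarrow> real \<Rightarrow> real \<Rightarrow> bool" where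
  "strict_equilibrium f m1 m2 x1 x2 \<longleftrightarrow>
     x1 \<in> {0..1} \<and> x2 \<in> {0..1} \<and>
     (\<forall>x1'\<in>{0..1}. payoff f m1 m2 x1' x2 \<ge> payoff f m1 m2 x1 x2 \<longrightarrow> equiv_cutoff f m1 x1' x1) \<and>
     (\<forall>x2'\<in>{0..1}. payoff f m2 m1 x2' x1 \<ge> payoff f m2 m1 x2 x1 \<longrightarrow> equiv_cutoff f m2 x2' x2)"

definition NIS :: "(real \<Rightarrow> real) \<Rightarrow> msg \<Rightarrow> msg \<Rightarrow> real \<Rightarrow> real \<Rightarrow> bool" where
  "NIS f m1 m2 x1 x2 \<longleftrightarrow>
     strict_equilibrium f m1 m2 x1 x2 \<and>
     (\<exists>\<epsilon>>0. \<forall>x1'\<in>{0..1}. \<forall>x2'\<in>{0..1}.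
        \<not> equiv_cutoff f m1 x1' x1 \<and> \<not> equiv_cutoff f m2 x2' x2 \<and>
        \<bar>x1' - x1\<bar> < \<epsilon> \<and> \<bar>x2' - x2\<bar> < \<epsilon> \<longrightarrow>
        payoff f m1 m2 x1 x2' > payoff f m1 m2 x1' x2' \<or>
        payoff f m2 m1 x2 x1' > payoff f m2 m1 x2' x1')"

definition xiL :: "msg \<Rightarrow> msg \<Rightarrow> real" where
  "xiL m m' = (if m = mR \<and> m' = mR then 0 else 1)"

definition xiR :: "msg \<Rightarrow> msg \<Rightarrow> real" where
  "xiR m m' = (if m = mL \<and> m' = mL then 1 else 0)"

end

theory Submission
  imports Defs
begin

lemma pos_closed:
  fixes f :: "real \<Rightarrow> real"
  assumes ab: "a < b" and fi: "f integrable_on {a..b}" and fp: "\<forall>x\<in>{a..b}. f x > 0"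
  shows "integral {a..b} f > 0"
proof -
  have ai: "f absolutely_integrable_on {a..b}"
    using fi fp by (intro nonnegative_absolutely_integrable_1) (auto intro: less_imp_le)
  have li: "integrable (lebesgue_on {a..b}) f"
    using ai by (simp add: absolutely_integrable_imp_integrable)
  have eq: "integral\<^sup>L (lebesgue_on {a..b}) f = integral {a..b} f"
    using li by (simp add: lebesgue_integral_eq_integral)
  have ge: "integral {a..b} f \<ge> 0" using fi fp by (intro integral_nonneg) (auto intro: less_imp_le)
  show ?thesis
  proof (rule ccontr)
    assume "\<not> ?thesis"
    then have "integral\<^sup>L (lebesgue_on {a..b}) f = 0" using ge eq by simp
    then have "AE x in lebesgue_on {a..b}. f x = 0"
      using li fp by (subst (asm) integral_nonneg_eq_0_iff_AE) (auto intro!: AE_I2 less_imp_le)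
    then have "AE x in lebesgue_on {a..b}. False"
      using fp by force
    then have "emeasure (lebesgue_on {a..b}) {a..b} = 0"
      by (subst (asm) AE_iff_measurable[where N="{a..b}"]) auto
    then have "emeasure lebesgue {a..b} = 0"
      by (simp add: emeasure_restrict_space)
    then show False using ab by simp
  qed
qed

lemma pos_open:
  fixes f :: "real \<Rightarrow> real"
  assumes ab: "a < b" and fi: "f integrable_on {a..b}" and fnn: "\<forall>x\<in>{a..b}. f x \<ge> 0"
    and fp: "\<forall>x\<in>{a<..<b}. f x > 0"
  shows "integral {a..b} f > 0"
proof -
  define a' where "a' = (2*a+b)/3"
  define b' where "b' = (a+2*b)/3"
  have sub: "{a'..b'} \<subseteq> {a..b}" using ab by (auto simp: a'_def b'_def)
  have i': "f integrable_on {a'..b'}" using integrable_on_subinterval[OF fi sub] .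
  have "integral {a'..b'} f > 0"
    apply (rule pos_closed[OF _ i'])
    using ab fp by (auto simp: a'_def b'_def)
  moreover have "integral {a'..b'} f \<le> integral {a..b} f"
    using integral_subset_le[OF sub i' fi] fnn by blast
  ultimately show ?thesis by linarith
qed

lemma int_spike:
  fixes g :: "real \<Rightarrow> real"
  assumes "A - B \<subseteq> {a,b}" "B - A \<subseteq> {a,b}"
  shows "integral A g = integral B g"
  by (rule integral_spike_set; rule negligible_subset[of "{a,b}"]) (use assms in auto)


context
  fixes f :: "real \<Rightarrow> real"
  assumes fi: "f integrable_on {0..1}" and fp: "\<forall>u\<in>{0..1}. f u > 0"
begin

lemma fabs: "f absolutely_integrable_on {0..1}"
  using fi fp by (intro nonnegative_absolutely_integrable_1) (auto intro: less_imp_le)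

lemma prod_int:
  assumes "continuous_on {0..1} c"
  shows "(\<lambda>u. c u * f u) integrable_on {0..1}"
proof -
  have "(\<lambda>u. c u * f u) absolutely_integrable_on {0..1}"
  proof (rule absolutely_integrable_bounded_measurable_product_real)
    show "c \<in> borel_measurable (lebesgue_on {0..1})"
      using assms by (intro continuous_imp_measurable_on_sets_lebesgue) auto
    show "bounded (c ` {0..1})"
      using assms by (intro compact_imp_bounded compact_continuous_image) auto
  qed (auto simp: fabs)
  then show ?thesis using set_lebesgue_integral_eq_integral(1) by blast
qed

lemma g1i: "0 \<le> a \<Longrightarrow> b \<le> 1 \<Longrightarrow> (\<lambda>u. (1-u) * f u) integrable_on {a..b}"
  by (rule integrable_on_subinterval[OF prod_int]) (auto intro!: continuous_intros)

lemma g0i: "0 \<le> a \<Longrightarrow> b \<le> 1 \<Longrightarrow> (\<lambda>u. u * f u) integrable_on {a..b}"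
  by (rule integrable_on_subinterval[OF prod_int]) (auto intro!: continuous_intros)

lemma fsi: "0 \<le> a \<Longrightarrow> b \<le> 1 \<Longrightarrow> f integrable_on {a..b}"
  by (rule integrable_on_subinterval[OF fi]) auto

lemma gnn: "0 \<le> u \<Longrightarrow> u \<le> 1 \<Longrightarrow> (1-u) * f u \<ge> 0"
  "0 \<le> u \<Longrightarrow> u \<le> 1 \<Longrightarrow> u * f u \<ge> 0"
proof -
  assume u: "0 \<le> u" "u \<le> 1"
  then have "f u > 0" using fp by auto
  then show "(1-u) * f u \<ge> 0" "u * f u \<ge> 0" using u by simp_all
qed

lemma gpos: "0 \<le> u \<Longrightarrow> u < 1 \<Longrightarrow> (1-u) * f u > 0"
  "0 < u \<Longrightarrow> u \<le> 1 \<Longrightarrow> u * f u > 0"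
  using fp by auto

lemma massL: "msg_mass f mL > 0"
  unfolding msg_mass_def msg_set_def using fp by (auto intro!: pos_closed fsi)

lemma massR: "msg_mass f mR > 0"
proof -
  have "msg_mass f mR = integral {1/2..1} f"
    unfolding msg_mass_def msg_set_def by (auto intro!: int_spike[where a="1/2" and b=1])
  also have "\<dots> > 0" using fp by (auto intro!: pos_closed fsi)
  finally show ?thesis .
qed

lemma mass_pos: "msg_mass f m > 0"
  using massL massR by (cases m) auto

lemma cdf1: "cond_cdf f m 1 = 1"
proof -
  have "msg_set m \<inter> {..1} = msg_set m" by (cases m) (auto simp: msg_set_def)
  then show ?thesis using mass_pos[of m] by (simp add: cond_cdf_def msg_mass_def)
qed

lemma cdf0: "cond_cdf f m 0 = 0"
proof (cases m)
  case mL
  have "integral (msg_set m \<inter> {..0}) f = integral {} f"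
    using mL by (intro int_spike[where a=0 and b=0]) (auto simp: msg_set_def)
  then show ?thesis by (simp add: cond_cdf_def)
next
  case mR
  have "msg_set m \<inter> {..0} = {}" using mR by (auto simp: msg_set_def)
  then show ?thesis by (simp add: cond_cdf_def)
qed

lemma payoff_p1:
  assumes "cond_cdf f m2 x2 = 1"
  shows "payoff f m1 m2 x x2 = integral ({..x} \<inter> msg_set m1) (\<lambda>u. (1-u) * f u) / msg_mass f m1"
proof -
  have "(\<lambda>u. (if u \<le> x then (1 - u) * cond_cdf f m2 x2 else u * (1 - cond_cdf f m2 x2)) * f u)
       = (\<lambda>u. if u \<in> {..x} then (1-u) * f u else 0)"
    using assms by auto
  then show ?thesis unfolding payoff_def by (simp only: integral_restrict_Int)
qed

lemma payoff_p0:
  assumes "cond_cdf f m2 x2 = 0"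
  shows "payoff f m1 m2 x x2 = integral ({x<..} \<inter> msg_set m1) (\<lambda>u. u * f u) / msg_mass f m1"
proof -
  have "(\<lambda>u. (if u \<le> x then (1 - u) * cond_cdf f m2 x2 else u * (1 - cond_cdf f m2 x2)) * f u)
       = (\<lambda>u. if u \<in> {x<..} then u * f u else 0)"
    using assms by auto
  then show ?thesis unfolding payoff_def by (simp only: integral_restrict_Int)
qed


lemma cmp:
  assumes "a / msg_mass f m \<ge> b / msg_mass f m"
  shows "a \<ge> b"
  using assms mass_pos[of m] by (simp add: divide_le_cancel)

lemma BR1:
  assumes p: "cond_cdf f m2 x2 = 1" and x': "x' \<in> {0..1}"
    and ge: "payoff f m1 m2 x' x2 \<ge> payoff f m1 m2 1 x2"
  shows "equiv_cutoff f m1 x' 1"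
proof -
  have ge': "integral ({..x'} \<inter> msg_set m1) (\<lambda>u. (1-u) * f u)
      \<ge> integral ({..1} \<inter> msg_set m1) (\<lambda>u. (1-u) * f u)"
    using ge unfolding payoff_p1[OF p] by (rule cmp)
  show ?thesis
  proof (cases m1)
    case mL
    show ?thesis
    proof (cases "x' \<ge> 1/2")
      case True
      then have "msg_set m1 \<inter> {..x'} = msg_set m1 \<inter> {..1}" using mL by (auto simp: msg_set_def)
      then show ?thesis by (simp add: equiv_cutoff_def cond_cdf_def)
    next
      case False
      have e1: "{..x'} \<inter> msg_set m1 = {0..x'}" using mL False by (auto simp: msg_set_def)
      have e2: "{..1} \<inter> msg_set m1 = {0..1/2}" using mL by (auto simp: msg_set_def)
      have "integral {0..x'} (\<lambda>u. (1-u) * f u) + integral {x'..1/2} (\<lambda>u. (1-u) * f u)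
          = integral {0..1/2} (\<lambda>u. (1-u) * f u)"
        using False x' by (intro Henstock_Kurzweil_Integration.integral_combine[where a=0 and c=x' and b="1/2"] g1i) auto
      moreover have "integral {x'..1/2} (\<lambda>u. (1-u) * f u) > 0"
        using False x' fp by (intro pos_open g1i) (auto intro!: gnn gpos)
      ultimately show ?thesis using ge' unfolding e1 e2 by linarith
    qed
  next
    case mR
    show ?thesis
    proof (cases "x' = 1")
      case True
      then show ?thesis by (simp add: equiv_cutoff_def)
    next
      case False
      define c where "c = max x' (1/2)"
      have c: "1/2 \<le> c" "c < 1" using False x' by (auto simp: c_def)
      have e1: "integral ({..x'} \<inter> msg_set m1) (\<lambda>u. (1-u) * f u) = integral {1/2..c} (\<lambda>u. (1-u) * f u)"
        using mR x' by (intro int_spike[where a="1/2" and b=c]) (auto simp: msg_set_def c_def)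
      have e2: "integral ({..1} \<inter> msg_set m1) (\<lambda>u. (1-u) * f u) = integral {1/2..1} (\<lambda>u. (1-u) * f u)"
        using mR by (intro int_spike[where a="1/2" and b=1]) (auto simp: msg_set_def)
      have "integral {1/2..c} (\<lambda>u. (1-u) * f u) + integral {c..1} (\<lambda>u. (1-u) * f u)
          = integral {1/2..1} (\<lambda>u. (1-u) * f u)"
        using c by (intro Henstock_Kurzweil_Integration.integral_combine g1i) auto
      moreover have "integral {c..1} (\<lambda>u. (1-u) * f u) > 0"
        using c fp by (intro pos_open g1i) (auto intro!: gnn gpos)
      ultimately show ?thesis using ge' unfolding e1 e2 by linarith
    qed
  qed
qed

lemma BR0:
  assumes p: "cond_cdf f m2 x2 = 0" and x': "x' \<in> {0..1}"
    and ge: "payoff f m1 m2 x' x2 \<ge> payoff f m1 m2 0 x2"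
  shows "equiv_cutoff f m1 x' 0"
proof -
  have ge': "integral ({x'<..} \<inter> msg_set m1) (\<lambda>u. u * f u)
      \<ge> integral ({0<..} \<inter> msg_set m1) (\<lambda>u. u * f u)"
    using ge unfolding payoff_p0[OF p] by (rule cmp)
  show ?thesis
  proof (cases m1)
    case mL
    show ?thesis
    proof (cases "x' = 0")
      case True
      then show ?thesis by (simp add: equiv_cutoff_def)
    next
      case False
      define c where "c = min x' (1/2)"
      have c: "0 < c" "c \<le> 1/2" using False x' by (auto simp: c_def)
      have e1: "integral ({x'<..} \<inter> msg_set m1) (\<lambda>u. u * f u) = integral {c..1/2} (\<lambda>u. u * f u)"
        using mL x' by (intro int_spike[where a=c and b="1/2"]) (auto simp: msg_set_def c_def)
      have e2: "integral ({0<..} \<inter> msg_set m1) (\<lambda>u. u * f u) = integral {0..1/2} (\<lambda>u. u * f u)"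
        using mL by (intro int_spike[where a=0 and b="1/2"]) (auto simp: msg_set_def)
      have "integral {0..c} (\<lambda>u. u * f u) + integral {c..1/2} (\<lambda>u. u * f u)
          = integral {0..1/2} (\<lambda>u. u * f u)"
        using c by (intro Henstock_Kurzweil_Integration.integral_combine[where a=0 and c=c and b="1/2"] g0i) auto
      moreover have "integral {0..c} (\<lambda>u. u * f u) > 0"
        using c fp by (intro pos_open g0i) (auto intro!: gnn gpos)
      ultimately show ?thesis using ge' unfolding e1 e2 by linarith
    qed
  next
    case mR
    show ?thesis
    proof (cases "x' \<le> 1/2")
      case True
      then have "msg_set m1 \<inter> {..x'} = msg_set m1 \<inter> {..0}" using mR by (auto simp: msg_set_def)
      then show ?thesis by (simp add: equiv_cutoff_def cond_cdf_def)
    next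
      case False
      have e1: "integral ({x'<..} \<inter> msg_set m1) (\<lambda>u. u * f u) = integral {x'..1} (\<lambda>u. u * f u)"
        using mR False by (intro int_spike[where a=x' and b=1]) (auto simp: msg_set_def)
      have e2: "integral ({0<..} \<inter> msg_set m1) (\<lambda>u. u * f u) = integral {1/2..1} (\<lambda>u. u * f u)"
        using mR by (intro int_spike[where a="1/2" and b=1]) (auto simp: msg_set_def)
      have "integral {1/2..x'} (\<lambda>u. u * f u) + integral {x'..1} (\<lambda>u. u * f u)
          = integral {1/2..1} (\<lambda>u. u * f u)"
        using False x' by (intro Henstock_Kurzweil_Integration.integral_combine g0i) auto
      moreover have "integral {1/2..x'} (\<lambda>u. u * f u) > 0"
        using False x' fp by (intro pos_open g0i) (auto intro!: gnn gpos)
      ultimately show ?thesis using ge' unfolding e1 e2 by linarith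
    qed
  qed
qed

end


lemma near1: "x' > 1/2 \<Longrightarrow> equiv_cutoff f mL x' 1"
proof -
  assume "x' > 1/2"
  then have "msg_set mL \<inter> {..x'} = msg_set mL \<inter> {..1}" by (auto simp: msg_set_def)
  then show ?thesis by (simp add: equiv_cutoff_def cond_cdf_def)
qed

lemma near0: "x' < 1/2 \<Longrightarrow> equiv_cutoff f mR x' 0"
proof -
  assume "x' < 1/2"
  then have "msg_set mR \<inter> {..x'} = msg_set mR \<inter> {..0}" by (auto simp: msg_set_def)
  then show ?thesis by (simp add: equiv_cutoff_def cond_cdf_def)
qed

lemma se1:
  assumes fi: "f integrable_on {0..1}" and fp: "\<forall>u\<in>{0..1}. f u > 0"
  shows "strict_equilibrium f m1 m2 1 1"
  unfolding strict_equilibrium_def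
  using BR1[OF fi fp cdf1[OF fi fp]] by auto

lemma se0:
  assumes fi: "f integrable_on {0..1}" and fp: "\<forall>u\<in>{0..1}. f u > 0"
  shows "strict_equilibrium f m1 m2 0 0"
  unfolding strict_equilibrium_def
  using BR0[OF fi fp cdf0[OF fi fp]] by auto

lemma nis1:
  assumes fi: "f integrable_on {0..1}" and fp: "\<forall>u\<in>{0..1}. f u > 0"
    and m: "m1 = mL \<or> m2 = mL"
  shows "NIS f m1 m2 1 1"
  unfolding NIS_def
proof (intro conjI se1[OF fi fp] exI[where x="1/2"])
  show "0 < (1/2::real)" by simp
  show "\<forall>x1'\<in>{0..1}. \<forall>x2'\<in>{0..1}.
        \<not> equiv_cutoff f m1 x1' 1 \<and> \<not> equiv_cutoff f m2 x2' 1 \<and>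
        \<bar>x1' - 1\<bar> < 1/2 \<and> \<bar>x2' - 1\<bar> < 1/2 \<longrightarrow>
        payoff f m1 m2 1 x2' > payoff f m1 m2 x1' x2' \<or>
        payoff f m2 m1 1 x1' > payoff f m2 m1 x2' x1'"
    using m near1[where f=f] by (auto simp: abs_if split: if_splits)
qed

lemma nis0:
  assumes fi: "f integrable_on {0..1}" and fp: "\<forall>u\<in>{0..1}. f u > 0"
    and m: "m1 = mR \<or> m2 = mR"
  shows "NIS f m1 m2 0 0"
  unfolding NIS_def
proof (intro conjI se0[OF fi fp] exI[where x="1/2"])
  show "0 < (1/2::real)" by simp
  show "\<forall>x1'\<in>{0..1}. \<forall>x2'\<in>{0..1}.
        \<not> equiv_cutoff f m1 x1' 0 \<and> \<not> equiv_cutoff f m2 x2' 0 \<and>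
        \<bar>x1' - 0\<bar> < 1/2 \<and> \<bar>x2' - 0\<bar> < 1/2 \<longrightarrow>
        payoff f m1 m2 0 x2' > payoff f m1 m2 x1' x2' \<or>
        payoff f m2 m1 0 x1' > payoff f m2 m1 x2' x1'"
    using m near0[where f=f] by (auto simp: abs_if split: if_splits)
qed

theorem mainTheorem13:
  fixes f :: "real \<Rightarrow> real" and m1 m2 :: msg
  assumes "f integrable_on {0..1}"
    and "\<forall>u\<in>{0..1}. f u > 0"
    and "integral {0..1} f = 1"
  shows "strict_equilibrium f m1 m2 (xiL m1 m2) (xiL m2 m1) \<and> NIS f m1 m2 (xiL m1 m2) (xiL m2 m1) \<and>
         strict_equilibrium f m1 m2 (xiR m1 m2) (xiR m2 m1) \<and> NIS f m1 m2 (xiR m1 m2) (xiR m2 m1)"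
  using se1[OF assms(1,2)] se0[OF assms(1,2)] nis1[OF assms(1,2)] nis0[OF assms(1,2)]
  by (cases m1; cases m2) (auto simp: xiL_def xiR_def)

end
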